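(* Fix a start pose $\mathbf{p}_0$ and a CSC path type with inputs satisfying $r_1=r_3$ (e.g. the constant-speed Dubins LSL path with $v_1=v_3$, $\omega_1=\omega_3>0$, or the Dubins RSR path with $v_1=v_3$, $\omega_1=\omega_3<0$). Then every pose $\mathbf{p}_f\in\mathbb{R}^2\times[0,2\pi)$ is reachable from $\mathbf{p}_0$ by that CSC path type.
   Context: A pose is $\mathbf{p}=(x,y,\theta)$, heading understood modulo $2\pi$. An input is $\mathbf{u}=(v,\omega)$ with $v>0$. The motion primitive $\mathrm{M}_{\mathbf{u},\tau}$ maps $(x,y,\theta)$ to: if $\omega\neq0$, $\big(x-\frac{v}{\omega}(\sin\theta-\sin(\theta+\omega\tau)),\ y+\frac{v}{\omega}(\cos\theta-\cos(\theta+\omega\tau)),\ \theta+\omega\tau\big)$; if $\omega=0$, $(x+v\tau\cos\theta,\ y+v\tau\sin\theta,\ \theta)$. A CSC path uses inputs $\mathbf{u}_1,\mathbf{u}_2,\mathbf{u}_3$ with $\omega_1\neq0$, $\omega_2=0$, $\omega_3\neq 0$; LSL means $\omega_1,\omega_3>0$ and RSR means $\omega_1,\omega_3<0$. For fixed inputs, $\mathbf{p}_f$ is reachable from $\mathbf{p}_0$ if there exist $\tau_1,\tau_2,\tau_3\ge0$, with $|\omega_i\tau_i|<2\pi$ for turning segments, such that $\mathrm{M}_{\mathbf{u}_3,\tau_3}(\mathrm{M}_{\mathbf{u}_2,\tau_2}(\mathrm{M}_{\mathbf{u}_1,\tau_1}(\mathbf{p}_0)))$ has position $(x_f,y_f)$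 and heading congruent to $\theta_f$ modulo $2\pi$. Notation: $r_i=v_i/\omega_i$. *)

theory Defs
  imports Complex_Main
begin

type_synonym pose = "real \<times> real \<times> real"   (* (x, y, theta) *)
type_synonym input = "real \<times> real"          (* (v, omega) *)

definition motion :: "input \<Rightarrow> real \<Rightarrow> pose \<Rightarrow> pose" where
  "motion u \<tau> p = (case u of (v, \<omega>) \<Rightarrow> case p of (x, y, \<theta>) \<Rightarrow>
     (if \<omega> \<noteq> 0 then
        (x - v / \<omega> * (sin \<theta> - sin (\<theta> + \<omega> * \<tau>)),
         y + v / \<omega> * (cos \<theta> - cos (\<theta> + \<omega> * \<tau>)),
         \<theta> + \<omega> * \<tau>)
      else (x + v * \<tau> * cos \<theta>, y + v * \<tau> * sin \<theta>, \<theta>)))"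

definition angle_cong :: "real \<Rightarrow> real \<Rightarrow> bool" where
  "angle_cong a b \<longleftrightarrow> (\<exists>k::int. a = b + 2 * pi * of_int k)"

definition csc_reachable :: "input \<Rightarrow> input \<Rightarrow> input \<Rightarrow> pose \<Rightarrow> pose \<Rightarrow> bool" where
  "csc_reachable u1 u2 u3 p0 pf \<longleftrightarrow>
     (\<exists>\<tau>1 \<tau>2 \<tau>3. \<tau>1 \<ge> 0 \<and> \<tau>2 \<ge> 0 \<and> \<tau>3 \<ge> 0 \<and>
        \<bar>snd u1 * \<tau>1\<bar> < 2 * pi \<and> \<bar>snd u3 * \<tau>3\<bar> < 2 * pi \<and>
        (let q = motion u3 \<tau>3 (motion u2 \<tau>2 (motion u1 \<tau>1 p0)) in
           fst q = fst pf \<and> fst (snd q) = fst (snd pf) \<and>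
           angle_cong (snd (snd q)) (snd (snd pf))))"

end

theory Submission
  imports Defs
begin

lemma sin_shift: "sin (x + 2 * pi * of_int (k::int)) = sin x"
  by (simp add: sin_add)

lemma cos_shift: "cos (x + 2 * pi * of_int (k::int)) = cos x"
  by (simp add: cos_add)

lemma red_pos: "\<exists>a (k::int). 0 \<le> a \<and> a < 2*pi \<and> t = a + 2*pi*of_int k"
proof -
  define k where "k = \<lfloor>t / (2*pi)\<rfloor>"
  define a where "a = t - 2*pi*of_int k"
  have p: "0 < 2*pi" by simp
  have "of_int k \<le> t/(2*pi)" "t/(2*pi) < of_int k + 1" unfolding k_def by linarith+
  hence "2*pi*of_int k \<le> t" "t < 2*pi*(of_int k + 1)" using p
    by (simp_all add: field_simps)
  hence "0 \<le> a" "a < 2*pi" unfolding a_def by (simp_all add: algebra_simps)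
  thus ?thesis by (intro exI[of _ a] exI[of _ k]) (simp add: a_def)
qed

lemma red_sign:
  assumes "(\<omega>::real) \<noteq> 0"
  shows "\<exists>\<tau> (k::int). \<tau> \<ge> 0 \<and> \<bar>\<omega>*\<tau>\<bar> < 2*pi \<and> \<omega>*\<tau> = t + 2*pi*of_int k"
proof (cases "\<omega> > 0")
  case True
  obtain a k where h: "0 \<le> a" "a < 2*pi" "t = a + 2*pi*of_int (k::int)" using red_pos by blast
  show ?thesis
    by (rule exI[of _ "a/\<omega>"], rule exI[of _ "-k"]) (use h True in auto)
next
  case False
  hence w: "\<omega> < 0" using assms by auto
  obtain a k where h: "0 \<le> a" "a < 2*pi" "-t = a + 2*pi*of_int (k::int)" using red_pos by blast
  have "0 \<le> -a/\<omega>" using h w by (simp add: divide_nonneg_neg)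
  moreover have "\<omega> * (-a/\<omega>) = -a" using w by simp
  ultimately show ?thesis
    by (intro exI[of _ "-a/\<omega>"] exI[of _ "k"]) (use h in auto)
qed

lemma dir: "\<exists>L \<phi>. L \<ge> 0 \<and> (dx::real) = L*cos \<phi> \<and> (dy::real) = L*sin \<phi>"
proof (cases "dx\<^sup>2 + dy\<^sup>2 = 0")
  case True
  hence "dx = 0" "dy = 0" by (simp_all add: sum_power2_eq_zero_iff)
  thus ?thesis by auto
next
  case False
  define L where "L = sqrt (dx\<^sup>2 + dy\<^sup>2)"
  have "dx\<^sup>2 + dy\<^sup>2 > 0" using False by (metis add_nonneg_nonneg zero_le_power2 order_le_less)
  hence Lp: "L > 0" unfolding L_def by simp
  have L2: "L\<^sup>2 = dx\<^sup>2 + dy\<^sup>2" unfolding L_def by simp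
  have "(dx/L)\<^sup>2 + (dy/L)\<^sup>2 = (dx\<^sup>2 + dy\<^sup>2) / L\<^sup>2"
    by (simp add: power_divide add_divide_distrib)
  also have "\<dots> = 1" unfolding L2[symmetric] using Lp by simp
  finally have "(dx/L)\<^sup>2 + (dy/L)\<^sup>2 = 1" .
  then obtain t where "dx/L = cos t" "dy/L = sin t" by (rule sincos_total_2pi)
  thus ?thesis using Lp by (intro exI[of _ L] exI[of _ t]) (auto simp: field_simps)
qed

theorem mainTheorem6:
  fixes v1 \<omega>1 v2 v3 \<omega>3 :: real and p0 :: pose and xf yf \<theta>f :: real
  assumes "v1 > 0" and "v2 > 0" and "v3 > 0"
    and "\<omega>1 \<noteq> 0" and "\<omega>3 \<noteq> 0"
    and "(\<omega>1 > 0 \<and> \<omega>3 > 0) \<or> (\<omega>1 < 0 \<and> \<omega>3 < 0)"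
    and "v1 / \<omega>1 = v3 / \<omega>3"
    and "0 \<le> \<theta>f" and "\<theta>f < 2 * pi"
  shows "csc_reachable (v1, \<omega>1) (v2, 0) (v3, \<omega>3) p0 (xf, yf, \<theta>f)"
proof -
  obtain x0 y0 \<theta>0 where p0: "p0 = (x0, y0, \<theta>0)" by (cases p0) auto
  define r where "r = v1 / \<omega>1"
  have r3: "v3 / \<omega>3 = r" using assms(7) r_def by simp
  obtain L \<phi> where L: "L \<ge> 0" "xf - r * sin \<theta>f - (x0 - r * sin \<theta>0) = L * cos \<phi>"
      "yf + r * cos \<theta>f - (y0 + r * cos \<theta>0) = L * sin \<phi>"
    using dir by blast
  obtain \<tau>1 k1 where t1: "\<tau>1 \<ge> 0" "\<bar>\<omega>1*\<tau>1\<bar> < 2*pi" "\<omega>1*\<tau>1 = (\<phi> - \<theta>0) + 2*pi*of_int (k1::int)"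
    using red_sign[OF assms(4)] by blast
  define \<tau>2 where "\<tau>2 = L / v2"
  have t2: "\<tau>2 \<ge> 0" "v2 * \<tau>2 = L" using L(1) assms(2) unfolding \<tau>2_def by auto
  obtain \<tau>3 k3 where t3: "\<tau>3 \<ge> 0" "\<bar>\<omega>3*\<tau>3\<bar> < 2*pi"
      "\<omega>3*\<tau>3 = (\<theta>f - (\<theta>0 + \<omega>1*\<tau>1)) + 2*pi*of_int (k3::int)"
    using red_sign[OF assms(5)] by blast
  have h1: "\<theta>0 + \<omega>1*\<tau>1 = \<phi> + 2*pi*of_int k1" using t1(3) by simp
  have h3: "\<theta>0 + \<omega>1*\<tau>1 + \<omega>3*\<tau>3 = \<theta>f + 2*pi*of_int k3" using t3(3) by simp
  have c1: "cos (\<theta>0 + \<omega>1*\<tau>1) = cos \<phi>" "sin (\<theta>0 + \<omega>1*\<tau>1) = sin \<phi>"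
    unfolding h1 by (simp_all only: sin_shift cos_shift)
  have c3: "cos (\<theta>0 + \<omega>1*\<tau>1 + \<omega>3*\<tau>3) = cos \<theta>f" "sin (\<theta>0 + \<omega>1*\<tau>1 + \<omega>3*\<tau>3) = sin \<theta>f"
    unfolding h3 by (simp_all only: sin_shift cos_shift)
  have m1: "motion (v1, \<omega>1) \<tau>1 p0 = (x0 - r * (sin \<theta>0 - sin \<phi>), y0 + r * (cos \<theta>0 - cos \<phi>), \<theta>0 + \<omega>1*\<tau>1)"
    using assms(4) c1 unfolding motion_def p0 r_def by simp
  have m2: "motion (v2, 0) \<tau>2 (motion (v1, \<omega>1) \<tau>1 p0) =
     (x0 - r * (sin \<theta>0 - sin \<phi>) + L * cos \<phi>, y0 + r * (cos \<theta>0 - cos \<phi>) + L * sin \<phi>, \<theta>0 + \<omega>1*\<tau>1)"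
    unfolding m1 unfolding motion_def using c1 t2(2)[symmetric] by (simp add: mult.assoc mult.left_commute)
  have m3: "motion (v3, \<omega>3) \<tau>3 (motion (v2, 0) \<tau>2 (motion (v1, \<omega>1) \<tau>1 p0)) =
     (x0 - r * (sin \<theta>0 - sin \<phi>) + L * cos \<phi> - r * (sin (\<theta>0 + \<omega>1*\<tau>1) - sin \<theta>f),
      y0 + r * (cos \<theta>0 - cos \<phi>) + L * sin \<phi> + r * (cos (\<theta>0 + \<omega>1*\<tau>1) - cos \<theta>f),
      \<theta>0 + \<omega>1*\<tau>1 + \<omega>3*\<tau>3)"
    unfolding m2 unfolding motion_def using assms(5) c3 r3 by (simp add: add.assoc)
  show ?thesis
    unfolding csc_reachable_def
    apply (rule exI[of _ \<tau>1], rule exI[of _ \<tau>2], rule exI[of _ \<tau>3])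
    using t1 t2 t3 L c1 h3 unfolding m3 Let_def angle_cong_def by (auto simp: algebra_simps)
qed

end
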